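(* Let $R>1$ and, in the upper half-plane model, let $\ell$ have endpoints $\pm R^{-1}$ (transversely oriented towards $0$) and $\ell'$ have endpoints $\pm R$ (transversely oriented towards $\infty$). For $\epsilon\in\{1,-1\}$ and $t\in\mathbb{R}$ let $$P_\epsilon(t)=\begin{bmatrix}1-t & -\epsilon R^{-1}t\\ \epsilon Rt & 1+t\end{bmatrix},\qquad P'_\epsilon(t)=\begin{bmatrix}1+t & -\epsilon Rt\\ \epsilon R^{-1}t & 1-t\end{bmatrix}\in G_0.$$ Let $h\in G_0$ be represented by $\begin{pmatrix}a&b\\c&d\end{pmatrix}$ with $ad-bc=1$, and suppose $|aR+\varepsilon' b+\varepsilon c+\varepsilon\varepsilon' dR^{-1}|<|R+\varepsilon\varepsilon' R^{-1}|$ for all $\varepsilon,\varepsilon'\in\{1,-1\}$, and that $h$ is not represented by a diagonal matrix. Then at least one of the following holds: one of the curves $(hP'_+(t))_{t>0}$, $(hP'_-(t))_{t>0}$ intersects $\mathsf{SQ}(\ell)$ transversely, or one of the curves $(P_+(t)^{-1}h)_{t>0}$, $(P_-(t)^{-1}h)_{t>0}$ intersects $\mathsf{SQ}(\ell')^{-1}$ transversely.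
   Context: $G_0=\mathrm{PSL}_2(\mathbb{R})$ (a $3$-manifold, identified with $\mathrm{AdS}^3$) acts on the upper half-plane by Möbius transformations; $[\cdot]$ denotes the class of a matrix. For a transversely oriented geodesic line $\ell$, the stem quadrant $\mathsf{SQ}(\ell)\subset G_0$ is the set of hyperbolic elements whose translation axis is orthogonal to $\ell$ and which translate towards the positive side of $\ell$; it is a $2$-dimensional surface in $G_0$. $\mathsf{SQ}(\ell')^{-1}=\{h^{-1}:h\in\mathsf{SQ}(\ell')\}$. Transverse intersection is meant in the sense of a curve meeting a surface transversely in $G_0$. *)

theory Defs
  imports "HOL-Analysis.Analysis"
begin

text \<open>Elements of PSL(2,R) are represented by matrices in SL(2,R) (type real^2^2,
  determinant 1).  Subsets of PSL(2,R) are represented by their (sign-symmetric)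
  preimages in SL(2,R); a curve in PSL(2,R) by a lift to SL(2,R).
  Points of the boundary RP^1 = R \<union> {\<infinity>} of the upper half-plane are represented by
  nonzero column vectors (x,y) (standing for x/y), and a matrix acts on them by
  matrix-vector multiplication (this is the Moebius action).\<close>

type_synonym mat2 = "real^2^2"

definition mk2 :: "real \<Rightarrow> real \<Rightarrow> real \<Rightarrow> real \<Rightarrow> mat2" where
  "mk2 a b c d = vector [vector [a, b], vector [c, d]]"

definition SL2 :: "mat2 set" where
  "SL2 = {A. det A = 1}"

definition tr2 :: "mat2 \<Rightarrow> real" where
  "tr2 A = A$1$1 + A$2$2"

definition hyperbolic :: "mat2 \<Rightarrow> bool" where
  "hyperbolic A \<longleftrightarrow> det A = 1 \<and> \<bar>tr2 A\<bar> > 2"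

definition eigvec :: "mat2 \<Rightarrow> real^2 \<Rightarrow> real \<Rightarrow> bool" where
  "eigvec A v lam \<longleftrightarrow> v \<noteq> 0 \<and> A *v v = lam *s v"

text \<open>For a hyperbolic element, the attracting (resp. repelling) fixed point on the
  boundary is the eigenline of the eigenvalue of absolute value > 1 (resp. < 1); the
  translation axis is the geodesic joining them, oriented from repelling to attracting.\<close>

definition br :: "real^2 \<Rightarrow> real^2 \<Rightarrow> real" where
  "br x y = x$1 * y$2 - x$2 * y$1"

text \<open>Two geodesics with endpoint pairs {p,q} and {u,v} meet orthogonally iff the
  endpoint pairs are harmonic (cross-ratio -1).\<close>
definition harmonic :: "real^2 \<Rightarrow> real^2 \<Rightarrow> real^2 \<Rightarrow> real^2 \<Rightarrow> bool" where
  "harmonic p q u v \<longleftrightarrow> br p u * br q v + br p v * br q u = 0"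

text \<open>A transversely oriented geodesic is given by its endpoints u, v and the set Pos
  of boundary points lying on its positive side.  The stem quadrant: hyperbolic
  elements whose axis is orthogonal to the geodesic and whose attracting fixed point
  lies on the positive side.\<close>
definition stem_quadrant :: "real^2 \<Rightarrow> real^2 \<Rightarrow> (real^2 \<Rightarrow> bool) \<Rightarrow> mat2 set" where
  "stem_quadrant u v Pos = {A. hyperbolic A \<and>
     (\<exists>p q lp lq. eigvec A p lp \<and> eigvec A q lq \<and> \<bar>lp\<bar> > 1 \<and> \<bar>lq\<bar> < 1 \<and>
        harmonic p q u v \<and> Pos p)}"

text \<open>ell: endpoints -1/R, 1/R, positive side towards 0.\<close>
definition SQ_ell :: "real \<Rightarrow> mat2 set" where
  "SQ_ell R = stem_quadrant (vector [-1/R, 1]) (vector [1/R, 1])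
      (\<lambda>p. R * \<bar>p$1\<bar> < \<bar>p$2\<bar>)"

text \<open>ell': endpoints -R, R, positive side towards infinity.\<close>
definition SQ_ell' :: "real \<Rightarrow> mat2 set" where
  "SQ_ell' R = stem_quadrant (vector [-R, 1]) (vector [R, 1])
      (\<lambda>p. \<bar>p$1\<bar> > R * \<bar>p$2\<bar>)"

definition set_inv :: "mat2 set \<Rightarrow> mat2 set" where
  "set_inv S = matrix_inv ` S"

definition Pmat :: "real \<Rightarrow> real \<Rightarrow> real \<Rightarrow> mat2" where
  "Pmat R e t = mk2 (1 - t) (- e * t / R) (e * R * t) (1 + t)"

definition Pmat' :: "real \<Rightarrow> real \<Rightarrow> real \<Rightarrow> mat2" where
  "Pmat' R e t = mk2 (1 + t) (- e * R * t) (e * t / R) (1 - t)"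

text \<open>Tangent vectors to a subset S at p: velocities at 0 of curves lying in S and
  passing through p at time 0 (for an embedded submanifold this is its tangent space).\<close>
definition tangent_vectors :: "mat2 set \<Rightarrow> mat2 \<Rightarrow> mat2 set" where
  "tangent_vectors S p = {w. \<exists>c. (\<forall>s. c s \<in> S) \<and> c 0 = p \<and>
       (c has_vector_derivative w) (at 0)}"

definition meets_transversely :: "(real \<Rightarrow> mat2) \<Rightarrow> real set \<Rightarrow> mat2 set \<Rightarrow> bool" where
  "meets_transversely gamma I S \<longleftrightarrow>
     (\<exists>t\<in>I. gamma t \<in> S \<and>
        (\<exists>w. (gamma has_vector_derivative w) (at t) \<and> w \<notin> tangent_vectors S (gamma t)))"

end

theory Submission
  imports Defs
begin

lemma mk2_nth[simp]:
  "mk2 a b c d $ 1 $ 1 = a" "mk2 a b c d $ 1 $ 2 = b"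
  "mk2 a b c d $ 2 $ 1 = c" "mk2 a b c d $ 2 $ 2 = d"
  by (simp_all add: mk2_def)

lemma mat2_eq: "(A::mat2) = B \<longleftrightarrow> A$1$1 = B$1$1 \<and> A$1$2 = B$1$2 \<and> A$2$1 = B$2$1 \<and> A$2$2 = B$2$2"
  by (auto simp: vec_eq_iff forall_2)

lemma mk2_mult: "mk2 a b c d ** mk2 a' b' c' d' =
   mk2 (a*a' + b*c') (a*b' + b*d') (c*a' + d*c') (c*b' + d*d')"
  by (simp add: mat2_eq matrix_matrix_mult_def sum_2)

lemma det_mk2: "det (mk2 a b c d) = a*d - b*c"
  by (simp add: det_2)

lemma mv1: "((A::mat2) *v p) $ 1 = A$1$1 * p$1 + A$1$2 * p$2"
  by (simp add: matrix_vector_mult_def sum_2)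
lemma mv2: "((A::mat2) *v p) $ 2 = A$2$1 * p$1 + A$2$2 * p$2"
  by (simp add: matrix_vector_mult_def sum_2)

lemma vec2_eq: "(p::real^2) = q \<longleftrightarrow> p$1 = q$1 \<and> p$2 = q$2"
  by (auto simp: vec_eq_iff forall_2)

lemma matrix_inv_eq:
  fixes A B :: mat2
  assumes "A ** B = mat 1" "B ** A = mat 1"
  shows "matrix_inv A = B"
proof -
  have ex: "\<exists>A'. A ** A' = mat 1 \<and> A' ** A = mat 1" using assms by blast
  define C where "C = matrix_inv A"
  have C: "A ** C = mat 1 \<and> C ** A = mat 1"
    unfolding C_def matrix_inv_def by (rule someI_ex[OF ex])
  have "C = C ** (A ** B)" using assms by (simp add: matrix_mul_rid)
  also have "\<dots> = (C ** A) ** B" by (simp add: matrix_mul_assoc)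
  also have "\<dots> = B" using C by (simp add: matrix_mul_lid)
  finally show ?thesis by (simp add: C_def)
qed

lemma mat1_2: "(mat 1 :: mat2) = mk2 1 0 0 1"
  by (simp add: mat2_eq mat_def)

lemma matrix_inv_2:
  fixes A :: mat2
  assumes "det A = 1"
  shows "matrix_inv A = mk2 (A$2$2) (- A$1$2) (- A$2$1) (A$1$1)"
proof (rule matrix_inv_eq)
  have d: "A$1$1 * A$2$2 - A$1$2 * A$2$1 = 1" using assms by (simp add: det_2)
  show "A ** mk2 (A$2$2) (- A$1$2) (- A$2$1) (A$1$1) = mat 1"
    using d by (simp add: mat2_eq matrix_matrix_mult_def sum_2 mat_def) (simp add: algebra_simps)
  show "mk2 (A$2$2) (- A$1$2) (- A$2$1) (A$1$1) ** A = mat 1"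
    using d by (simp add: mat2_eq matrix_matrix_mult_def sum_2 mat_def) (simp add: algebra_simps)
qed

lemma eig_comp:
  assumes "eigvec (A::mat2) p l"
  shows "A$1$1 * p$1 + A$1$2 * p$2 = l * p$1" "A$2$1 * p$1 + A$2$2 * p$2 = l * p$2"
    "p$1 \<noteq> 0 \<or> p$2 \<noteq> 0"
proof -
  have "A *v p = l *s p" "p \<noteq> 0" using assms by (auto simp: eigvec_def)
  then show "A$1$1 * p$1 + A$1$2 * p$2 = l * p$1" "A$2$1 * p$1 + A$2$2 * p$2 = l * p$2"
    "p$1 \<noteq> 0 \<or> p$2 \<noteq> 0"
    by (auto simp: vec2_eq mv1 mv2)
qed

lemma lin_cond:
  assumes p: "eigvec (A::mat2) p lp" and q: "eigvec A q lq" and ne: "lp \<noteq> lq"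
  shows "A$2$1 * (p$1*q$1) + A$1$2 * (p$2*q$2) = 0"
proof -
  note P = eig_comp[OF p] and Q = eig_comp[OF q]
  define al be ga de where "al = A$1$1" "be = A$1$2" "ga = A$2$1" "de = A$2$2"
  define p1 p2 q1 q2 where "p1 = p$1" "p2 = p$2" "q1 = q$1" "q2 = q$2"
  have P1: "al*p1 + be*p2 = lp*p1" and P2: "ga*p1 + de*p2 = lp*p2"
   and Q1: "al*q1 + be*q2 = lq*q1" and Q2: "ga*q1 + de*q2 = lq*q2"
    using P Q by (simp_all add: al_be_ga_de_def p1_p2_q1_q2_def)
  have pn: "p1 \<noteq> 0 \<or> p2 \<noteq> 0" and qn: "q1 \<noteq> 0 \<or> q2 \<noteq> 0"
    using P Q by (simp_all add: p1_p2_q1_q2_def)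
  have Ep: "ga*p1^2 + (de-al)*p1*p2 - be*p2^2 = 0"
  proof -
    have "ga*p1^2 + (de-al)*p1*p2 - be*p2^2 = p1*(ga*p1 + de*p2) - p2*(al*p1 + be*p2)"
      by (simp add: algebra_simps power2_eq_square)
    also have "\<dots> = 0" using P1 P2 by simp
    finally show ?thesis .
  qed
  have Eq: "ga*q1^2 + (de-al)*q1*q2 - be*q2^2 = 0"
  proof -
    have "ga*q1^2 + (de-al)*q1*q2 - be*q2^2 = q1*(ga*q1 + de*q2) - q2*(al*q1 + be*q2)"
      by (simp add: algebra_simps power2_eq_square)
    also have "\<dots> = 0" using Q1 Q2 by simp
    finally show ?thesis .
  qed
  have key: "(p1*q2 - p2*q1) * (ga*p1*q1 + be*p2*q2) =
     (ga*p1^2 + (de-al)*p1*p2 - be*p2^2)*q1*q2 - (ga*q1^2 + (de-al)*q1*q2 - be*q2^2)*p1*p2"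
    by (simp add: algebra_simps power2_eq_square)
  have dnz: "p1*q2 - p2*q1 \<noteq> 0"
  proof
    assume h: "p1*q2 - p2*q1 = 0"
    show False
    proof (cases "p1 = 0")
      case True
      then have "p2 \<noteq> 0" using pn by simp
      with h True have "q1 = 0" by simp
      then have "q2 \<noteq> 0" using qn by simp
      from P2 True have "de*p2 = lp*p2" by simp
      with \<open>p2 \<noteq> 0\<close> have "de = lp" by simp
      from Q2 \<open>q1 = 0\<close> have "de*q2 = lq*q2" by simp
      with \<open>q2 \<noteq> 0\<close> have "de = lq" by simp
      with \<open>de = lp\<close> ne show False by simp
    next
      case False
      define k where "k = q1/p1"
      have q1k: "q1 = k*p1" using False by (simp add: k_def)
      have q2k: "q2 = k*p2"
      proof -
        have "p1*q2 = p1*(k*p2)" using h q1k by (simp add: algebra_simps)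
        with False show ?thesis by simp
      qed
      have "k \<noteq> 0" using qn q1k q2k by auto
      have "k*(al*p1 + be*p2) = lq*(k*p1)" using Q1 q1k q2k by (simp add: algebra_simps)
      then have "k*(lp*p1) = lq*(k*p1)" using P1 by simp
      with \<open>k \<noteq> 0\<close> False have "lp = lq" by simp
      with ne show False by simp
    qed
  qed
  have "(p1*q2 - p2*q1) * (ga*p1*q1 + be*p2*q2) = 0" using key Ep Eq by simp
  with dnz have "ga*p1*q1 + be*p2*q2 = 0" by simp
  then show ?thesis by (simp add: al_be_ga_de_def p1_p2_q1_q2_def algebra_simps)
qed

lemma lin_from_harm:
  assumes p: "eigvec (A::mat2) p lp" and q: "eigvec A q lq" and ne: "lp \<noteq> lq"
    and h: "p$2*q$2 = K * (p$1*q$1)"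
  shows "A$2$1 + K * A$1$2 = 0"
proof -
  note P = eig_comp[OF p] and Q = eig_comp[OF q]
  have L: "A$2$1 * (p$1*q$1) + A$1$2 * (p$2*q$2) = 0" by (rule lin_cond[OF p q ne])
  show ?thesis
  proof (cases "p$1*q$1 = 0")
    case False
    from L h have "(p$1*q$1) * (A$2$1 + K * A$1$2) = 0" by (simp add: algebra_simps)
    with False show ?thesis by simp
  next
    case True
    then have z: "p$2*q$2 = 0" using h by simp
    show ?thesis
    proof (cases "p$1 = 0")
      case True
      then have "p$2 \<noteq> 0" using P by simp
      then have "q$2 = 0" using z by simp
      then have "q$1 \<noteq> 0" using Q by simp
      have "A$1$2 * p$2 = 0" using P(1) \<open>p$1 = 0\<close> by simp
      then have "A$1$2 = 0" using \<open>p$2 \<noteq> 0\<close> by simp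
      have "A$2$1 * q$1 = 0" using Q(2) \<open>q$2 = 0\<close> by simp
      then have "A$2$1 = 0" using \<open>q$1 \<noteq> 0\<close> by simp
      show ?thesis using \<open>A$1$2 = 0\<close> \<open>A$2$1 = 0\<close> by simp
    next
      case False
      then have "q$1 = 0" using True by simp
      then have "q$2 \<noteq> 0" using Q by simp
      then have "p$2 = 0" using z by simp
      have "A$2$1 * p$1 = 0" using P(2) \<open>p$2 = 0\<close> by simp
      then have "A$2$1 = 0" using False by simp
      have "A$1$2 * q$2 = 0" using Q(1) \<open>q$1 = 0\<close> by simp
      then have "A$1$2 = 0" using \<open>q$2 \<noteq> 0\<close> by simp
      show ?thesis using \<open>A$1$2 = 0\<close> \<open>A$2$1 = 0\<close> by simp
    qed
  qed
qed

lemma SQ_lin: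
  assumes "A \<in> SQ_ell R" "R > 0"
  shows "A$2$1 + R^2 * A$1$2 = 0"
proof -
  obtain p q lp lq where p: "eigvec A p lp" and q: "eigvec A q lq" and l: "\<bar>lp\<bar> > 1" "\<bar>lq\<bar> < 1"
    and h: "harmonic p q (vector [-1/R, 1]) (vector [1/R, 1])"
    using assms(1) by (auto simp: SQ_ell_def stem_quadrant_def)
  have ne: "lp \<noteq> lq" using l by auto
  from h have "(p$1 + p$2/R)*(q$1 - q$2/R) + (p$1 - p$2/R)*(q$1 + q$2/R) = 0"
    by (simp add: harmonic_def br_def)
  then have "2*(p$1*q$1) - 2*(p$2*q$2)/R^2 = 0"
    by (simp add: algebra_simps power2_eq_square)
  then have "p$2*q$2 = R^2 * (p$1*q$1)" using assms(2) by (simp add: field_simps)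
  from lin_from_harm[OF p q ne this] show ?thesis .
qed

lemma SQ'_lin:
  assumes "A \<in> SQ_ell' R" "R > 0"
  shows "R^2 * A$2$1 + A$1$2 = 0" "det A = 1"
proof -
  obtain p q lp lq where p: "eigvec A p lp" and q: "eigvec A q lq" and l: "\<bar>lp\<bar> > 1" "\<bar>lq\<bar> < 1"
    and h: "harmonic p q (vector [-R, 1]) (vector [R, 1])" and hy: "hyperbolic A"
    using assms(1) by (auto simp: SQ_ell'_def stem_quadrant_def)
  show "det A = 1" using hy by (simp add: hyperbolic_def)
  have ne: "lp \<noteq> lq" using l by auto
  from h have "(p$1 + R*p$2)*(q$1 - R*q$2) + (p$1 - R*p$2)*(q$1 + R*q$2) = 0"
    by (simp add: harmonic_def br_def mult.commute)
  then have "2*(p$1*q$1) - 2*R^2*(p$2*q$2) = 0"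
    by (simp add: algebra_simps power2_eq_square)
  then have "p$2*q$2 = (1/R^2) * (p$1*q$1)" using assms(2) by (simp add: field_simps)
  from lin_from_harm[OF p q ne this] have "A$2$1 + 1/R^2 * A$1$2 = 0" .
  then show "R^2 * A$2$1 + A$1$2 = 0" using assms(2) by (simp add: field_simps)
qed

lemma setinv_lin:
  assumes "N \<in> set_inv (SQ_ell' R)" "R > 0"
  shows "R^2 * N$2$1 + N$1$2 = 0"
proof -
  obtain A where A: "A \<in> SQ_ell' R" and N: "N = matrix_inv A"
    using assms(1) by (auto simp: set_inv_def)
  have "R^2 * A$2$1 + A$1$2 = 0" "det A = 1" using SQ'_lin[OF A assms(2)] by auto
  then show ?thesis using N matrix_inv_2 by simp
qed

lemma tangent_lin:
  assumes S: "\<forall>A\<in>S. k1 * A$2$1 + k2 * A$1$2 = 0" and w: "w \<in> tangent_vectors S p"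
  shows "k1 * w$2$1 + k2 * w$1$2 = 0"
proof -
  obtain c where c: "\<forall>s. c s \<in> S" "(c has_vector_derivative w) (at 0)"
    using w by (auto simp: tangent_vectors_def)
  define f where "f = (\<lambda>A::mat2. k1 * A$2$1 + k2 * A$1$2)"
  have lf: "linear f" unfolding f_def by (simp add: linear_iff algebra_simps)
  have bl: "bounded_linear f" using lf by (simp add: linear_conv_bounded_linear)
  have d1: "((\<lambda>s. f (c s)) has_vector_derivative f w) (at 0)"
    by (rule bounded_linear.has_vector_derivative[OF bl c(2)])
  have "(\<lambda>s. f (c s)) = (\<lambda>s. 0)" using c(1) S by (auto simp: f_def)
  then have d2: "((\<lambda>s. f (c s)) has_vector_derivative 0) (at 0)" by simp
  have "f w = 0" by (rule vector_derivative_unique_at[OF d1 d2])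
  then show ?thesis by (simp add: f_def)
qed

lemma affine_deriv: "((\<lambda>t. H + t *\<^sub>R (W::mat2)) has_vector_derivative W) (at t)"
proof -
  have "((\<lambda>t. t *\<^sub>R W) has_vector_derivative (t *\<^sub>R 0 + 1 *\<^sub>R W)) (at t)"
    by (rule has_vector_derivative_scaleR) (auto intro: derivative_eq_intros)
  then have "((\<lambda>t. t *\<^sub>R W) has_vector_derivative W) (at t)" by simp
  from has_vector_derivative_add[OF has_vector_derivative_const this]
  show ?thesis by simp
qed

lemma abs_gt_sq: "(x::real)^2 > y^2 \<Longrightarrow> y \<ge> 0 \<Longrightarrow> \<bar>x\<bar> > y"
  using abs_le_square_iff[of x y] by auto

lemma member_SQ_gen:
  assumes R: "R > 0" and det: "al*de - be*ga = 1" and ga: "ga = -(R^2*be)" and be: "be \<noteq> 0"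
    and T: "\<bar>al + de\<bar> > 2" and sum: "lp + lq = al + de" and prod: "lp * lq = 1"
    and lp: "\<bar>lp\<bar> > 1" and lq: "\<bar>lq\<bar> < 1" and pos: "R * \<bar>be\<bar> < \<bar>lp - al\<bar>"
  shows "mk2 al be ga de \<in> SQ_ell R"
proof -
  have ev: "eigvec (mk2 al be ga de) (vector [be, l - al]) l" if l: "l*l - (al+de)*l + 1 = 0" for l
  proof -
    have "ga*be + de*(l - al) = l*(l - al)"
      using l det by (simp add: algebra_simps)
    then show ?thesis using be
      by (auto simp: eigvec_def vec2_eq mv1 mv2 algebra_simps)
  qed
  have "lp*lp - (al+de)*lp + 1 = lp*lp - (lp+lq)*lp + lp*lq" using sum prod by simp
  also have "\<dots> = 0" by (simp add: algebra_simps)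
  finally have lpe: "lp*lp - (al+de)*lp + 1 = 0" .
  have "lq*lq - (al+de)*lq + 1 = lq*lq - (lp+lq)*lq + lp*lq" using sum prod by simp
  also have "\<dots> = 0" by (simp add: algebra_simps)
  finally have lqe: "lq*lq - (al+de)*lq + 1 = 0" .
  have "(lp - al)*(lq - al) = lp*lq - al*(lp+lq) + al^2" by (simp add: algebra_simps power2_eq_square)
  also have "\<dots> = 1 - al*(al+de) + al^2" using sum prod by simp
  also have "\<dots> = R^2*be^2" using det ga by (simp add: algebra_simps power2_eq_square)
  finally have pq: "(lp - al)*(lq - al) = R^2*be^2" .
  have harm: "harmonic (vector [be, lp - al]) (vector [be, lq - al]) (vector [-1/R, 1]) (vector [1/R, 1])"
  proof -
    have "(be + (lp-al)/R)*(be - (lq-al)/R) + (be - (lp-al)/R)*(be + (lq-al)/R)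
       = 2*be^2 - 2*((lp-al)*(lq-al))/R^2"
      by (simp add: algebra_simps power2_eq_square diff_divide_distrib add_divide_distrib)
    also have "\<dots> = 0" using pq R by simp
    finally show ?thesis by (simp add: harmonic_def br_def)
  qed
  have hy: "hyperbolic (mk2 al be ga de)" using det T by (simp add: hyperbolic_def tr2_def det_mk2)
  have pos': "R * \<bar>(vector [be, lp - al]::real^2)$1\<bar> < \<bar>(vector [be, lp - al]::real^2)$2\<bar>"
    using pos by simp
  show ?thesis
    unfolding SQ_ell_def stem_quadrant_def
    using hy ev[OF lpe] ev[OF lqe] lp lq harm pos' by blast
qed

lemma member_SQ:
  assumes R: "R > 0" and det: "al*de - be*ga = 1" and ga: "ga = -(R^2*be)"
    and h: "(al - de)^2 > 4*R^2*be^2" and a: "de^2 > al^2"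
  shows "mk2 al be ga de \<in> SQ_ell R"
proof -
  define T where "T = al + de"
  have TD: "T^2 - 4 = (al - de)^2 - 4*R^2*be^2"
    using det ga by (simp add: T_def algebra_simps power2_eq_square)
  have T4: "T^2 > 4" using TD h by simp
  have Tabs: "\<bar>T\<bar> > 2" using abs_gt_sq[of 2 T] T4 by simp
  have Tda: "T*(de - al) > 0" using a by (simp add: T_def algebra_simps power2_eq_square)
  show ?thesis
  proof (cases "be = 0")
    case True
    then have ga0: "ga = 0" using ga by simp
    have ad: "al*de = 1" using det True by simp
    have "de \<noteq> 0" using ad by auto
    then have "de^2 > 0" by simp
    have "al^2 * de^2 < de^2 * de^2" by (rule mult_strict_right_mono[OF a \<open>de^2 > 0\<close>])
    moreover have "al^2 * de^2 = 1" using ad by (simp add: power_mult_distrib[symmetric])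
    ultimately have "(de^2)^2 > 1^2" by (simp add: power2_eq_square)
    then have "\<bar>de^2\<bar> > 1" using abs_gt_sq[of 1 "de^2"] by simp
    then have de2: "de^2 > 1" by simp
    then have d1: "\<bar>de\<bar> > 1" using abs_gt_sq[of 1 de] by simp
    have "al^2 * de^2 = 1" using ad by (simp add: power_mult_distrib[symmetric])
    then have "al^2 < 1"
    proof -
      assume e: "al^2 * de^2 = 1"
      show ?thesis
      proof (rule ccontr)
        assume "\<not> al^2 < 1"
        then have "1 * de^2 \<le> al^2 * de^2" by (intro mult_right_mono) auto
        then show False using e de2 by simp
      qed
    qed
    then have a1: "\<bar>al\<bar> < 1" using abs_le_square_iff[of 1 al] by (auto simp: not_le[symmetric])
    have ev1: "eigvec (mk2 al be ga de) (vector [0,1]) de"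
      using True ga0 by (auto simp: eigvec_def vec2_eq mv1 mv2)
    have ev2: "eigvec (mk2 al be ga de) (vector [1,0]) al"
      using True ga0 by (auto simp: eigvec_def vec2_eq mv1 mv2)
    have harm: "harmonic (vector [0,1]) (vector [1,0]) (vector [-1/R, 1]) (vector [1/R, 1])"
      by (simp add: harmonic_def br_def)
    have hy: "hyperbolic (mk2 al be ga de)" using det Tabs by (simp add: hyperbolic_def tr2_def det_mk2 T_def)
    have pos': "R * \<bar>(vector [0,1]::real^2)$1\<bar> < \<bar>(vector [0,1]::real^2)$2\<bar>"
      by simp
    show ?thesis
      unfolding SQ_ell_def stem_quadrant_def
      using hy ev1 ev2 d1 a1 harm pos' by blast
  next
    case False
    define r where "r = sqrt (T^2 - 4)"
    have r0: "r > 0" using T4 by (simp add: r_def)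
    have r2: "r^2 = T^2 - 4" using T4 by (simp add: r_def)
    have dah: "\<bar>de - al\<bar> > 2*R*\<bar>be\<bar>"
    proof -
      have "(de-al)^2 > (2*R*\<bar>be\<bar>)^2" using h by (simp add: power_mult_distrib power2_commute)
      then show ?thesis using abs_gt_sq[of "2*R*\<bar>be\<bar>" "de-al"] R by simp
    qed
    show ?thesis
    proof (cases "T > 0")
      case True
      define lp lq where "lp = (T + r)/2" "lq = (T - r)/2"
      have da: "de - al > 0" using Tda True by (simp add: zero_less_mult_iff)
      have prod: "lp*lq = 1" using r2 by (simp add: lp_lq_def field_simps power2_eq_square)
      have lp1: "lp > 1" using Tabs True r0 by (simp add: lp_lq_def)
      have "lq = 1/lp" using prod lp1 by (simp add: field_simps)
      then have lq1: "\<bar>lq\<bar> < 1" using lp1 by simp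
      have pos: "R*\<bar>be\<bar> < \<bar>lp - al\<bar>"
      proof -
        have "lp - al = (de - al + r)/2" by (simp add: lp_lq_def T_def field_simps)
        then show ?thesis using dah da r0 by simp
      qed
      show ?thesis
        by (rule member_SQ_gen[OF R det ga False _ _ prod _ lq1 pos])
           (use Tabs lp1 in \<open>simp_all add: T_def lp_lq_def field_simps\<close>)
    next
      case False
      then have Tn: "T < 0" using Tabs by auto
      define lp lq where "lp = (T - r)/2" "lq = (T + r)/2"
      have da: "de - al < 0" using Tda Tn by (simp add: zero_less_mult_iff)
      have prod: "lp*lq = 1" using r2 by (simp add: lp_lq_def field_simps power2_eq_square)
      have lp1: "lp < -1" using Tabs Tn r0 by (simp add: lp_lq_def)
      have "lq = 1/lp" using prod lp1 by (simp add: field_simps)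
      then have "\<bar>lq\<bar> = 1/\<bar>lp\<bar>" by simp
      moreover have "\<bar>lp\<bar> > 1" using lp1 by simp
      ultimately have lq1: "\<bar>lq\<bar> < 1" by simp
      have pos: "R*\<bar>be\<bar> < \<bar>lp - al\<bar>"
      proof -
        have "lp - al = (de - al - r)/2" by (simp add: lp_lq_def T_def field_simps)
        then show ?thesis using dah da r0 by simp
      qed
      show ?thesis
        by (rule member_SQ_gen[OF R det ga \<open>be \<noteq> 0\<close> _ _ prod _ lq1 pos])
           (use Tabs lp1 in \<open>simp_all add: T_def lp_lq_def field_simps\<close>)
    qed
  qed
qed

lemma member_SQ'_gen:
  assumes R: "R > 0" and det: "al*de - be*ga = 1" and be: "be = -(R^2*ga)" and ga: "ga \<noteq> 0"
    and T: "\<bar>al + de\<bar> > 2" and sum: "lp + lq = al + de" and prod: "lp * lq = 1"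
    and lp: "\<bar>lp\<bar> > 1" and lq: "\<bar>lq\<bar> < 1" and pos: "R * \<bar>ga\<bar> < \<bar>lp - de\<bar>"
  shows "mk2 al be ga de \<in> SQ_ell' R"
proof -
  have ev: "eigvec (mk2 al be ga de) (vector [l - de, ga]) l" if l: "l*l - (al+de)*l + 1 = 0" for l
  proof -
    have "al*(l - de) + be*ga = l*(l - de)"
      using l det by (simp add: algebra_simps)
    then show ?thesis using ga
      by (auto simp: eigvec_def vec2_eq mv1 mv2 algebra_simps)
  qed
  have "lp*lp - (al+de)*lp + 1 = lp*lp - (lp+lq)*lp + lp*lq" using sum prod by simp
  also have "\<dots> = 0" by (simp add: algebra_simps)
  finally have lpe: "lp*lp - (al+de)*lp + 1 = 0" .
  have "lq*lq - (al+de)*lq + 1 = lq*lq - (lp+lq)*lq + lp*lq" using sum prod by simp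
  also have "\<dots> = 0" by (simp add: algebra_simps)
  finally have lqe: "lq*lq - (al+de)*lq + 1 = 0" .
  have "(lp - de)*(lq - de) = lp*lq - de*(lp+lq) + de^2" by (simp add: algebra_simps power2_eq_square)
  also have "\<dots> = 1 - de*(al+de) + de^2" using sum prod by simp
  also have "\<dots> = R^2*ga^2" using det be by (simp add: algebra_simps power2_eq_square)
  finally have pq: "(lp - de)*(lq - de) = R^2*ga^2" .
  have harm: "harmonic (vector [lp - de, ga]) (vector [lq - de, ga]) (vector [-R, 1]) (vector [R, 1])"
  proof -
    have "((lp-de) + R*ga)*((lq-de) - R*ga) + ((lp-de) - R*ga)*((lq-de) + R*ga)
       = 2*((lp-de)*(lq-de)) - 2*R^2*ga^2"
      by (simp add: algebra_simps power2_eq_square)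
    also have "\<dots> = 0" using pq by simp
    finally show ?thesis by (simp add: harmonic_def br_def mult.commute)
  qed
  have hy: "hyperbolic (mk2 al be ga de)" using det T by (simp add: hyperbolic_def tr2_def det_mk2)
  have pos': "\<bar>(vector [lp - de, ga]::real^2)$1\<bar> > R * \<bar>(vector [lp - de, ga]::real^2)$2\<bar>"
    using pos by simp
  show ?thesis
    unfolding SQ_ell'_def stem_quadrant_def
    using hy ev[OF lpe] ev[OF lqe] lp lq harm pos' by blast
qed

lemma member_SQ':
  assumes R: "R > 0" and det: "al*de - be*ga = 1" and be: "be = -(R^2*ga)"
    and h: "(al - de)^2 > 4*R^2*ga^2" and a: "al^2 > de^2"
  shows "mk2 al be ga de \<in> SQ_ell' R"
proof -
  define T where "T = al + de"
  have TD: "T^2 - 4 = (al - de)^2 - 4*R^2*ga^2"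
    using det be by (simp add: T_def algebra_simps power2_eq_square)
  have T4: "T^2 > 4" using TD h by simp
  have Tabs: "\<bar>T\<bar> > 2" using abs_gt_sq[of 2 T] T4 by simp
  have Tda: "T*(al - de) > 0" using a by (simp add: T_def algebra_simps power2_eq_square)
  show ?thesis
  proof (cases "ga = 0")
    case True
    then have be0: "be = 0" using be by simp
    have ad: "al*de = 1" using det True by simp
    have "al \<noteq> 0" using ad by auto
    then have "al^2 > 0" by simp
    have "de^2 * al^2 < al^2 * al^2" by (rule mult_strict_right_mono[OF a \<open>al^2 > 0\<close>])
    moreover have "de^2 * al^2 = 1" using ad by (simp add: power_mult_distrib[symmetric] mult.commute)
    ultimately have "(al^2)^2 > 1^2" by (simp add: power2_eq_square)
    then have "\<bar>al^2\<bar> > 1" using abs_gt_sq[of 1 "al^2"] by simp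
    then have al2: "al^2 > 1" by simp
    then have d1: "\<bar>al\<bar> > 1" using abs_gt_sq[of 1 al] by simp
    have "de^2 * al^2 = 1" using ad by (simp add: power_mult_distrib[symmetric] mult.commute)
    then have "de^2 < 1"
    proof -
      assume e: "de^2 * al^2 = 1"
      show ?thesis
      proof (rule ccontr)
        assume "\<not> de^2 < 1"
        then have "1 * al^2 \<le> de^2 * al^2" by (intro mult_right_mono) auto
        then show False using e al2 by simp
      qed
    qed
    then have a1: "\<bar>de\<bar> < 1" using abs_le_square_iff[of 1 de] by (auto simp: not_le[symmetric])
    have ev1: "eigvec (mk2 al be ga de) (vector [1,0]) al"
      using True be0 by (auto simp: eigvec_def vec2_eq mv1 mv2)
    have ev2: "eigvec (mk2 al be ga de) (vector [0,1]) de"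
      using True be0 by (auto simp: eigvec_def vec2_eq mv1 mv2)
    have harm: "harmonic (vector [1,0]) (vector [0,1]) (vector [-R, 1]) (vector [R, 1])"
      by (simp add: harmonic_def br_def)
    have hy: "hyperbolic (mk2 al be ga de)" using det Tabs by (simp add: hyperbolic_def tr2_def det_mk2 T_def)
    have pos': "\<bar>(vector [1,0]::real^2)$1\<bar> > R * \<bar>(vector [1,0]::real^2)$2\<bar>"
      by simp
    show ?thesis
      unfolding SQ_ell'_def stem_quadrant_def
      using hy ev1 ev2 d1 a1 harm pos' by blast
  next
    case False
    define r where "r = sqrt (T^2 - 4)"
    have r0: "r > 0" using T4 by (simp add: r_def)
    have r2: "r^2 = T^2 - 4" using T4 by (simp add: r_def)
    have dah: "\<bar>al - de\<bar> > 2*R*\<bar>ga\<bar>"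
    proof -
      have "(al-de)^2 > (2*R*\<bar>ga\<bar>)^2" using h by (simp add: power_mult_distrib power2_commute)
      then show ?thesis using abs_gt_sq[of "2*R*\<bar>ga\<bar>" "al-de"] R by simp
    qed
    show ?thesis
    proof (cases "T > 0")
      case True
      define lp lq where "lp = (T + r)/2" "lq = (T - r)/2"
      have da: "al - de > 0" using Tda True by (simp add: zero_less_mult_iff)
      have prod: "lp*lq = 1" using r2 by (simp add: lp_lq_def field_simps power2_eq_square)
      have lp1: "lp > 1" using Tabs True r0 by (simp add: lp_lq_def)
      have "lq = 1/lp" using prod lp1 by (simp add: field_simps)
      then have lq1: "\<bar>lq\<bar> < 1" using lp1 by simp
      have pos: "R*\<bar>ga\<bar> < \<bar>lp - de\<bar>"
      proof -
        have "lp - de = (al - de + r)/2" by (simp add: lp_lq_def T_def field_simps)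
        then show ?thesis using dah da r0 by simp
      qed
      show ?thesis
        by (rule member_SQ'_gen[OF R det be False _ _ prod _ lq1 pos])
           (use Tabs lp1 in \<open>simp_all add: T_def lp_lq_def field_simps\<close>)
    next
      case False
      then have Tn: "T < 0" using Tabs by auto
      define lp lq where "lp = (T - r)/2" "lq = (T + r)/2"
      have da: "al - de < 0" using Tda Tn by (simp add: zero_less_mult_iff)
      have prod: "lp*lq = 1" using r2 by (simp add: lp_lq_def field_simps power2_eq_square)
      have lp1: "lp < -1" using Tabs Tn r0 by (simp add: lp_lq_def)
      have "lq = 1/lp" using prod lp1 by (simp add: field_simps)
      then have "\<bar>lq\<bar> = 1/\<bar>lp\<bar>" by simp
      moreover have "\<bar>lp\<bar> > 1" using lp1 by simp
      ultimately have lq1: "\<bar>lq\<bar> < 1" by simp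
      have pos: "R*\<bar>ga\<bar> < \<bar>lp - de\<bar>"
      proof -
        have "lp - de = (al - de - r)/2" by (simp add: lp_lq_def T_def field_simps)
        then show ?thesis using dah da r0 by simp
      qed
      show ?thesis
        by (rule member_SQ'_gen[OF R det be \<open>ga \<noteq> 0\<close> _ _ prod _ lq1 pos])
           (use Tabs lp1 in \<open>simp_all add: T_def lp_lq_def field_simps\<close>)
    qed
  qed
qed

lemma member_setinv:
  assumes R: "R > 0" and det: "n11*n22 - n12*n21 = 1" and lin: "R^2*n21 + n12 = 0"
    and h: "(n11 - n22)^2 > 4*R^2*n21^2" and a: "n22^2 > n11^2"
  shows "mk2 n11 n12 n21 n22 \<in> set_inv (SQ_ell' R)"
proof -
  have B: "mk2 n22 (-n12) (-n21) n11 \<in> SQ_ell' R"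
  proof (rule member_SQ'[OF R])
    show "n22 * n11 - - n12 * - n21 = 1" using det by (simp add: algebra_simps)
    show "- n12 = - (R\<^sup>2 * - n21)" using lin by (simp add: algebra_simps)
    show "4 * R\<^sup>2 * (- n21)\<^sup>2 < (n22 - n11)\<^sup>2" using h by (simp add: power2_commute)
    show "n11\<^sup>2 < n22\<^sup>2" by (rule a)
  qed
  have "det (mk2 n22 (-n12) (-n21) n11) = 1" using det by (simp add: det_mk2 algebra_simps)
  then have "matrix_inv (mk2 n22 (-n12) (-n21) n11) = mk2 n11 n12 n21 n22"
    by (simp add: matrix_inv_2)
  then show ?thesis using B unfolding set_inv_def by (metis image_eqI)
qed

lemma core_ineq:
  fixes R P Q s al be de e :: real
  assumes R: "R > 1" and h1: "\<bar>P + Q\<bar> < R + 1/R" and h2: "\<bar>P - Q\<bar> < R - 1/R"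
    and s: "s \<noteq> 0" and e: "e*e = 1"
    and sal: "s*al*R = e*(1 - R^2*P^2)" and sde: "s*de = e*R*(Q^2 - R^2)" and sbe: "s*be = P*Q - 1"
  shows "(al - de)^2 > 4*R^2*be^2" "de^2 > al^2"
proof -
  have R0: "R > 0" using R by simp
  have a1: "R*\<bar>P+Q\<bar> < R^2 + 1"
  proof -
    have "R*\<bar>P+Q\<bar> < R*(R + 1/R)" using h1 R0 by simp
    also have "\<dots> = R^2 + 1" using R0 by (simp add: field_simps power2_eq_square)
    finally show ?thesis .
  qed
  have a2: "R*\<bar>P-Q\<bar> < R^2 - 1"
  proof -
    have "R*\<bar>P-Q\<bar> < R*(R - 1/R)" using h2 R0 by simp
    also have "\<dots> = R^2 - 1" using R0 by (simp add: field_simps power2_eq_square)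
    finally show ?thesis .
  qed
  have F1: "(1+R^2)^2 - R^2*(P+Q)^2 > 0"
  proof -
    have "(R*\<bar>P+Q\<bar>)^2 < (R^2+1)^2" using a1 R0
      by (intro power_strict_mono) auto
    then show ?thesis by (simp add: power_mult_distrib algebra_simps)
  qed
  have F2: "(R^2-1)^2 - R^2*(P-Q)^2 > 0"
  proof -
    have "(R*\<bar>P-Q\<bar>)^2 < (R^2-1)^2" using a2 R0
      by (intro power_strict_mono) auto
    then show ?thesis by (simp add: power_mult_distrib algebra_simps)
  qed
  define X where "X = 1 + R^4 - R^2*(P^2+Q^2)"
  have X2: "2*X = ((1+R^2)^2 - R^2*(P+Q)^2) + ((R^2-1)^2 - R^2*(P-Q)^2)"
    by (simp add: X_def algebra_simps power2_eq_square power4_eq_xxxx)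
  have X0: "X > 0" using X2 F1 F2 by simp
  have id1: "X^2 - 4*R^4*(P*Q-1)^2 = ((1+R^2)^2 - R^2*(P+Q)^2) * ((R^2-1)^2 - R^2*(P-Q)^2)"
    by (simp add: X_def algebra_simps power2_eq_square power4_eq_xxxx)
  have "s*(al - de)*R = e*X"
  proof -
    have "s*(al-de)*R = s*al*R - (s*de)*R" by (simp add: algebra_simps)
    also have "\<dots> = e*(1 - R^2*P^2) - e*R*(Q^2-R^2)*R" using sal sde by simp
    also have "\<dots> = e*X" by (simp add: X_def algebra_simps power2_eq_square power4_eq_xxxx)
    finally show ?thesis .
  qed
  then have e1: "s^2*R^2*(al-de)^2 = X^2"
    by (metis e power_mult_distrib mult.commute mult_1 power2_eq_square mult.assoc)
  have e2: "s^2*R^2*(4*R^2*be^2) = 4*R^4*(P*Q-1)^2"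
  proof -
    have "s^2*R^2*(4*R^2*be^2) = 4*R^4*(s*be)^2" by (simp add: power_mult_distrib power4_eq_xxxx power2_eq_square algebra_simps)
    then show ?thesis using sbe by simp
  qed
  have pos: "s^2*R^2 > 0" using s R0 by simp
  have "s^2*R^2*((al-de)^2 - 4*R^2*be^2) = X^2 - 4*R^4*(P*Q-1)^2"
    using e1 e2 by (simp add: right_diff_distrib)
  also have "\<dots> = ((1+R^2)^2 - R^2*(P+Q)^2) * ((R^2-1)^2 - R^2*(P-Q)^2)" by (rule id1)
  finally have "s^2*R^2*((al-de)^2 - 4*R^2*be^2) > 0" using mult_pos_pos[OF F1 F2] by simp
  then show "(al - de)^2 > 4*R^2*be^2" using pos by (simp add: zero_less_mult_iff)
  have G1: "R^4 - 1 - R^2*(Q^2 - P^2) > 0"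
  proof -
    have "R^2*(Q^2 - P^2) = (R*(Q-P))*(R*(Q+P))" by (simp add: algebra_simps power2_eq_square)
    also have "\<dots> \<le> \<bar>R*(Q-P)\<bar>*\<bar>R*(Q+P)\<bar>" by (metis abs_ge_self abs_mult)
    also have "\<dots> = (R*\<bar>P-Q\<bar>)*(R*\<bar>P+Q\<bar>)" using R0 by (simp add: abs_mult abs_minus_commute add.commute)
    also have "\<dots> < (R^2-1)*(R^2+1)"
    proof (rule mult_strict_mono[OF a2 a1])
      show "0 < R^2 - 1" using R by (simp add: one_less_power)
      show "0 \<le> R * \<bar>P + Q\<bar>" using R0 by simp
    qed
    also have "\<dots> = R^4 - 1" by (simp add: algebra_simps power2_eq_square power4_eq_xxxx)
    finally show ?thesis by simp
  qed
  have id2: "R^4*(Q^2-R^2)^2 - (1 - R^2*P^2)^2 = (R^4 - 1 - R^2*(Q^2 - P^2)) * X"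
    by (simp add: X_def algebra_simps power2_eq_square power4_eq_xxxx)
  have e3: "s^2*R^2*de^2 = R^4*(Q^2-R^2)^2"
  proof -
    have "s^2*R^2*de^2 = R^2*(s*de)^2" by (simp add: power_mult_distrib)
    also have "\<dots> = R^2*(e*R*(Q^2-R^2))^2" using sde by simp
    also have "\<dots> = R^4*(Q^2-R^2)^2" using e by (simp add: power_mult_distrib power2_eq_square power4_eq_xxxx)
    finally show ?thesis .
  qed
  have e4: "s^2*R^2*al^2 = (1 - R^2*P^2)^2"
  proof -
    have "s^2*R^2*al^2 = (s*al*R)^2" by (simp add: power_mult_distrib)
    also have "\<dots> = (e*(1 - R^2*P^2))^2" using sal by simp
    also have "\<dots> = (1 - R^2*P^2)^2" using e by (simp add: power_mult_distrib power2_eq_square)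
    finally show ?thesis .
  qed
  have "s^2*R^2*(de^2 - al^2) = R^4*(Q^2-R^2)^2 - (1 - R^2*P^2)^2"
    using e3 e4 by (simp add: right_diff_distrib)
  also have "\<dots> = (R^4 - 1 - R^2*(Q^2 - P^2)) * X" by (rule id2)
  finally have "s^2*R^2*(de^2 - al^2) > 0" using mult_pos_pos[OF G1 X0] by simp
  then show "de^2 > al^2" using pos by (simp add: zero_less_mult_iff)
qed

lemma ids1:
  fixes a b c z R e s L :: real
  assumes e: "e*e = 1" and det: "a*(z*R) - b*c = 1"
    and s: "s = c - R^2*b + e*(z - a*R^3)" and L: "L = c + R^2*b"
  shows "s*a*R - L*(a*R + e*b) = e*(1 - R^2*(a*R+e*b)^2)"
    "s*(z*R) + L*(z*R + e*c*R) = e*R*((z + e*c)^2 - R^2)"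
    "s*b + L*(b + e*a*R) = (a*R + e*b)*(z + e*c) - 1"
  using assms by algebra+

lemma ids2:
  fixes a b c z R e s L :: real
  assumes e: "e*e = 1" and det: "a*(z*R) - b*c = 1"
    and s: "s = b - R^2*c + e*(z - R^3*a)" and L: "L = R^2*c + b"
  shows "s*a*R - L*(a*R + e*c) = e*(1 - R^2*(a*R+e*c)^2)"
    "s*(z*R) + L*(z*R + e*R*b) = e*R*((z + e*b)^2 - R^2)"
    "s*c + L*(c + e*R*a) = (a*R + e*c)*(z + e*b) - 1"
  using assms by algebra+

lemma mk2_affine: "mk2 a b c d + t *\<^sub>R mk2 w11 w12 w21 w22 =
   mk2 (a + t*w11) (b + t*w12) (c + t*w21) (d + t*w22)"
  by (simp add: mat2_eq)

lemma curve1: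
  fixes R a b c d e :: real
  assumes R: "R > 1" and det: "a*d - b*c = 1" and e: "e*e = 1"
    and h1: "\<bar>(a*R + e*b) + (d/R + e*c)\<bar> < R + 1/R"
    and h2: "\<bar>(a*R + e*b) - (d/R + e*c)\<bar> < R - 1/R"
    and sL: "(c - R^2*b + e*(d/R - a*R^3)) * (c + R^2*b) < 0"
  shows "meets_transversely (\<lambda>t. mk2 a b c d ** Pmat' R e t) {0<..} (SQ_ell R)"
proof -
  have R0: "R > 0" using R by simp
  define z where "z = d/R"
  have dz: "d = z*R" using R0 by (simp add: z_def)
  define s where "s = c - R^2*b + e*(z - a*R^3)"
  define L where "L = c + R^2*b"
  have sL': "s*L < 0" using sL by (simp add: s_def L_def z_def)
  then have s0: "s \<noteq> 0" by auto
  define t0 where "t0 = -L/s"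
  have t0pos: "t0 > 0" using sL' by (auto simp: t0_def mult_less_0_iff divide_less_0_iff)
  have st0: "s*t0 = -L" using s0 by (simp add: t0_def)
  define w11 w12 w21 w22 where "w11 = a + e*b/R" "w12 = -(b + e*a*R)"
     "w21 = c + e*d/R" "w22 = -(d + e*c*R)"
  define W where "W = mk2 w11 w12 w21 w22"
  have geq: "(\<lambda>t. mk2 a b c d ** Pmat' R e t) = (\<lambda>t. mk2 a b c d + t *\<^sub>R W)"
  proof
    fix t
    show "mk2 a b c d ** Pmat' R e t = mk2 a b c d + t *\<^sub>R W"
      unfolding Pmat'_def mk2_mult W_def mk2_affine w11_w12_w21_w22_def
      using R0 by (simp add: mat2_eq field_simps)
  qed
  define al be ga de where "al = a + t0*w11" "be = b + t0*w12" "ga = c + t0*w21" "de = d + t0*w22"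
  have gt0: "mk2 a b c d ** Pmat' R e t0 = mk2 al be ga de"
    using geq unfolding W_def mk2_affine al_be_ga_de_def by metis
  have detP: "det (Pmat' R e t0) = 1"
  proof -
    have "det (Pmat' R e t0) = (1+t0)*(1-t0) - (-e*R*t0)*(e*t0/R)" by (simp add: Pmat'_def det_mk2)
    also have "\<dots> = 1 - t0^2 + (e*e)*t0^2" using R0 by (simp add: field_simps power2_eq_square)
    also have "\<dots> = 1" using e by simp
    finally show ?thesis .
  qed
  have detg: "al*de - be*ga = 1"
  proof -
    have "det (mk2 a b c d ** Pmat' R e t0) = 1" using det detP by (simp add: det_mul det_mk2)
    then show ?thesis using gt0 by (simp add: det_mk2)
  qed
  have detz: "a*(z*R) - b*c = 1" using det dz by simp
  note I = ids1[OF e detz s_def L_def]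
  have sal: "s*al*R = e*(1 - R^2*(a*R+e*b)^2)"
  proof -
    have "s*al*R = s*a*R + (s*t0)*(w11*R)" by (simp add: al_be_ga_de_def algebra_simps)
    also have "\<dots> = s*a*R - L*(a*R + e*b)" using st0 R0 by (simp add: w11_w12_w21_w22_def field_simps)
    finally show ?thesis using I(1) by simp
  qed
  have sde: "s*de = e*R*((z + e*c)^2 - R^2)"
  proof -
    have "s*de = s*(z*R) + (s*t0)*w22" by (simp add: al_be_ga_de_def algebra_simps dz)
    also have "\<dots> = s*(z*R) + L*(z*R + e*c*R)" using st0 by (simp add: w11_w12_w21_w22_def dz algebra_simps)
    finally show ?thesis using I(2) by simp
  qed
  have sbe: "s*be = (a*R + e*b)*(z + e*c) - 1"
  proof -
    have "s*be = s*b + (s*t0)*w12" by (simp add: al_be_ga_de_def algebra_simps)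
    also have "\<dots> = s*b + L*(b + e*a*R)" using st0 by (simp add: w11_w12_w21_w22_def algebra_simps)
    finally show ?thesis using I(3) by simp
  qed
  have ws: "w21 + R^2*w12 = s"
    using R0 by (simp add: w11_w12_w21_w22_def s_def z_def field_simps power2_eq_square power3_eq_cube)
  have gaeq: "ga = -(R^2*be)"
  proof -
    have "ga + R^2*be = L + t0*(w21 + R^2*w12)" by (simp add: al_be_ga_de_def L_def algebra_simps)
    also have "\<dots> = 0" using ws st0 by (simp add: mult.commute)
    finally show ?thesis by simp
  qed
  have h1': "\<bar>(a*R + e*b) + (z + e*c)\<bar> < R + 1/R" using h1 by (simp add: z_def)
  have h2': "\<bar>(a*R + e*b) - (z + e*c)\<bar> < R - 1/R" using h2 by (simp add: z_def)
  note C = core_ineq[OF R h1' h2' s0 e sal sde sbe]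
  have mem: "mk2 al be ga de \<in> SQ_ell R" by (rule member_SQ[OF R0 detg gaeq C])
  have der: "((\<lambda>t. mk2 a b c d ** Pmat' R e t) has_vector_derivative W) (at t0)"
    unfolding geq by (rule affine_deriv)
  have notan: "W \<notin> tangent_vectors (SQ_ell R) (mk2 al be ga de)"
  proof
    assume "W \<in> tangent_vectors (SQ_ell R) (mk2 al be ga de)"
    moreover have "\<forall>A\<in>SQ_ell R. 1 * A$2$1 + R^2 * A$1$2 = 0" using SQ_lin R0 by simp
    ultimately have "1 * W$2$1 + R^2 * W$1$2 = 0" by (rule tangent_lin[rotated])
    then have "s = 0" using ws by (simp add: W_def)
    with s0 show False by simp
  qed
  show ?thesis unfolding meets_transversely_def
    using t0pos mem der notan gt0 by (intro bexI[of _ t0]) auto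
qed

lemma curve2:
  fixes R a b c d e :: real
  assumes R: "R > 1" and det: "a*d - b*c = 1" and e: "e*e = 1"
    and h1: "\<bar>(a*R + e*c) + (d/R + e*b)\<bar> < R + 1/R"
    and h2: "\<bar>(a*R + e*c) - (d/R + e*b)\<bar> < R - 1/R"
    and sL: "(b - R^2*c + e*(d/R - R^3*a)) * (R^2*c + b) < 0"
  shows "meets_transversely (\<lambda>t. matrix_inv (Pmat R e t) ** mk2 a b c d) {0<..} (set_inv (SQ_ell' R))"
proof -
  have R0: "R > 0" using R by simp
  define z where "z = d/R"
  have dz: "d = z*R" using R0 by (simp add: z_def)
  define s where "s = b - R^2*c + e*(z - R^3*a)"
  define L where "L = R^2*c + b"
  have sL': "s*L < 0" using sL by (simp add: s_def L_def z_def)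
  then have s0: "s \<noteq> 0" by auto
  define t0 where "t0 = -L/s"
  have t0pos: "t0 > 0" using sL' by (auto simp: t0_def mult_less_0_iff divide_less_0_iff)
  have st0: "s*t0 = -L" using s0 by (simp add: t0_def)
  have invP: "matrix_inv (Pmat R e t) = mk2 (1+t) (e*t/R) (-(e*R*t)) (1-t)" for t
  proof -
    have "det (Pmat R e t) = (1-t)*(1+t) - (-e*t/R)*(e*R*t)" by (simp add: Pmat_def det_mk2)
    also have "\<dots> = 1 - t^2 + (e*e)*t^2" using R0 by (simp add: field_simps power2_eq_square)
    also have "\<dots> = 1" using e by simp
    finally have "det (Pmat R e t) = 1" .
    then show ?thesis by (simp add: matrix_inv_2 Pmat_def)
  qed
  define w11 w12 w21 w22 where "w11 = a + e*c/R" "w12 = b + e*d/R"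
     "w21 = -(c + e*R*a)" "w22 = -(d + e*R*b)"
  define W where "W = mk2 w11 w12 w21 w22"
  have geq: "(\<lambda>t. matrix_inv (Pmat R e t) ** mk2 a b c d) = (\<lambda>t. mk2 a b c d + t *\<^sub>R W)"
  proof
    fix t
    show "matrix_inv (Pmat R e t) ** mk2 a b c d = mk2 a b c d + t *\<^sub>R W"
      unfolding invP mk2_mult W_def mk2_affine w11_w12_w21_w22_def
      using R0 by (simp add: mat2_eq field_simps)
  qed
  define al be ga de where "al = a + t0*w11" "be = b + t0*w12" "ga = c + t0*w21" "de = d + t0*w22"
  have gt0: "matrix_inv (Pmat R e t0) ** mk2 a b c d = mk2 al be ga de"
    using geq unfolding W_def mk2_affine al_be_ga_de_def by metis
  have detP: "det (mk2 (1+t0) (e*t0/R) (-(e*R*t0)) (1-t0)) = 1"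
  proof -
    have "det (mk2 (1+t0) (e*t0/R) (-(e*R*t0)) (1-t0)) = (1+t0)*(1-t0) - (e*t0/R)*(-(e*R*t0))"
      by (simp add: det_mk2)
    also have "\<dots> = 1 - t0^2 + (e*e)*t0^2" using R0 by (simp add: field_simps power2_eq_square)
    also have "\<dots> = 1" using e by simp
    finally show ?thesis .
  qed
  have detg: "al*de - be*ga = 1"
  proof -
    have "det (matrix_inv (Pmat R e t0) ** mk2 a b c d) = 1" using det detP
      by (simp add: det_mul det_mk2 invP)
    then show ?thesis using gt0 by (simp add: det_mk2)
  qed
  have detz: "a*(z*R) - b*c = 1" using det dz by simp
  note I = ids2[OF e detz s_def L_def]
  have sal: "s*al*R = e*(1 - R^2*(a*R+e*c)^2)"
  proof -
    have "s*al*R = s*a*R + (s*t0)*(w11*R)" by (simp add: al_be_ga_de_def algebra_simps)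
    also have "\<dots> = s*a*R - L*(a*R + e*c)" using st0 R0 by (simp add: w11_w12_w21_w22_def field_simps)
    finally show ?thesis using I(1) by simp
  qed
  have sde: "s*de = e*R*((z + e*b)^2 - R^2)"
  proof -
    have "s*de = s*(z*R) + (s*t0)*w22" by (simp add: al_be_ga_de_def algebra_simps dz)
    also have "\<dots> = s*(z*R) + L*(z*R + e*R*b)" using st0 by (simp add: w11_w12_w21_w22_def dz algebra_simps)
    finally show ?thesis using I(2) by simp
  qed
  have sga: "s*ga = (a*R + e*c)*(z + e*b) - 1"
  proof -
    have "s*ga = s*c + (s*t0)*w21" by (simp add: al_be_ga_de_def algebra_simps)
    also have "\<dots> = s*c + L*(c + e*R*a)" using st0 by (simp add: w11_w12_w21_w22_def algebra_simps)
    finally show ?thesis using I(3) by simp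
  qed
  have ws: "R^2*w21 + w12 = s"
    using R0 by (simp add: w11_w12_w21_w22_def s_def z_def field_simps power2_eq_square power3_eq_cube)
  have lin: "R^2*ga + be = 0"
  proof -
    have "R^2*ga + be = L + t0*(R^2*w21 + w12)" by (simp add: al_be_ga_de_def L_def algebra_simps)
    also have "\<dots> = 0" using ws st0 by (simp add: mult.commute)
    finally show ?thesis .
  qed
  have h1': "\<bar>(a*R + e*c) + (z + e*b)\<bar> < R + 1/R" using h1 by (simp add: z_def)
  have h2': "\<bar>(a*R + e*c) - (z + e*b)\<bar> < R - 1/R" using h2 by (simp add: z_def)
  note C = core_ineq[OF R h1' h2' s0 e sal sde sga]
  have mem: "mk2 al be ga de \<in> set_inv (SQ_ell' R)" by (rule member_setinv[OF R0 detg lin C])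
  have der: "((\<lambda>t. matrix_inv (Pmat R e t) ** mk2 a b c d) has_vector_derivative W) (at t0)"
    unfolding geq by (rule affine_deriv)
  have notan: "W \<notin> tangent_vectors (set_inv (SQ_ell' R)) (mk2 al be ga de)"
  proof
    assume "W \<in> tangent_vectors (set_inv (SQ_ell' R)) (mk2 al be ga de)"
    moreover have "\<forall>A\<in>set_inv (SQ_ell' R). R^2 * A$2$1 + 1 * A$1$2 = 0" using setinv_lin R0 by simp
    ultimately have "R^2 * W$2$1 + 1 * W$1$2 = 0" by (rule tangent_lin[rotated])
    then have "s = 0" using ws by (simp add: W_def)
    with s0 show False by simp
  qed
  show ?thesis unfolding meets_transversely_def
    using t0pos mem der notan gt0 by (intro bexI[of _ t0]) auto
qed

lemma key_abs:
  fixes k x y u v :: real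
  assumes k: "k > 1" and x: "x \<le> 0" and y: "0 \<le> y" and hu: "\<bar>u - k*x\<bar> < 4"
    and hv: "\<bar>v - k*y\<bar> < 4" and uv: "u > v" and id: "u * v - x*y = 16"
  shows False
proof -
  define A B where "A = k*y - 4" "B = 4 + k*x"
  define K where "K = k*k"
  have "1*1 \<le> k*k" using k by (intro mult_mono) auto
  then have K1: "K \<ge> 1" by (simp add: K_def)
  have vA: "A < v" and uB: "u < B" using hu hv by (auto simp: A_B_def abs_less_iff)
  have AB: "k*(y - x) < 8" using vA uB uv by (simp add: A_B_def algebra_simps)
  have AB2: "K*(y - x) < 8*k"
  proof -
    have "k*(k*(y - x)) < k*8" using AB k by (intro mult_strict_left_mono) auto
    then show ?thesis by (simp add: K_def algebra_simps)
  qed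
  have yK: "y \<le> K*y" using y K1 by (metis mult_le_cancel_right1 less_le_not_le)
  have xK: "-x \<le> -(K*x)"
  proof -
    have "(K - 1)*x \<le> 0" using K1 x by (simp add: mult_nonneg_nonpos)
    then show ?thesis by (simp add: algebra_simps)
  qed
  have A2: "A^2 \<le> 16 + x*y"
  proof -
    have f: "8*k - K*y + x \<ge> 0" using AB2 xK by (simp add: algebra_simps)
    have "16 + x*y - A^2 = y*(8*k - K*y + x)"
      by (simp add: A_B_def K_def algebra_simps power2_eq_square)
    also have "\<dots> \<ge> 0" using f y by simp
    finally show ?thesis by simp
  qed
  have B2: "B^2 \<le> 16 + x*y"
  proof -
    have f: "8*k + K*x - y \<ge> 0" using AB2 yK by (simp add: algebra_simps)
    have "16 + x*y - B^2 = (-x)*(8*k + K*x - y)"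
      by (simp add: A_B_def K_def algebra_simps power2_eq_square)
    also have "\<dots> \<ge> 0" using f x by (intro mult_nonneg_nonneg) auto
    finally show ?thesis by simp
  qed
  define Mx where "Mx = max \<bar>A\<bar> \<bar>B\<bar>"
  have uM: "\<bar>u\<bar> < Mx" using vA uB uv by (auto simp: Mx_def abs_less_iff max_def)
  have vM: "\<bar>v\<bar> < Mx" using vA uB uv by (auto simp: Mx_def abs_less_iff max_def)
  have "u * v \<le> \<bar>u\<bar>*\<bar>v\<bar>" by (metis abs_ge_self abs_mult)
  also have "\<dots> < Mx*Mx" using uM vM by (intro mult_strict_mono) auto
  also have "Mx*Mx \<le> 16 + x*y"
  proof -
    have "Mx*Mx = A^2 \<or> Mx*Mx = B^2" by (auto simp: Mx_def max_def power2_eq_square abs_mult_self_eq)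
    then show ?thesis using A2 B2 by auto
  qed
  finally show False using id by simp
qed

lemma bk_bound:
  fixes R P Q :: real
  assumes R: "R > 1" and h: "\<bar>P - Q\<bar> < R - 1/R"
  shows "\<bar>2*(Q/R + R*P) - ((R^2+1)/(R^2-1)) * (2*(R*P - Q/R))\<bar> < 4"
proof -
  have R0: "R > 0" using R by simp
  have R21: "R^2 - 1 > 0" using R by (simp add: one_less_power)
  have N: "R - 1/R > 0" using R mult_strict_mono[of 1 R 1 R] by (simp add: field_simps)
  have eq: "2*(Q/R + R*P) - ((R^2+1)/(R^2-1)) * (2*(R*P - Q/R)) = -4*(P - Q)/(R - 1/R)"
    using R0 R21 N by (simp add: field_simps power2_eq_square)
  have a4: "\<bar>-4*(P - Q)\<bar> = 4*\<bar>P - Q\<bar>" by (simp only: abs_mult)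
  have "\<bar>-4*(P - Q)/(R - 1/R)\<bar> = \<bar>-4*(P - Q)\<bar>/\<bar>R - 1/R\<bar>" by (rule abs_divide)
  also have "\<dots> = 4*\<bar>P - Q\<bar>/(R - 1/R)" using N a4 by simp
  finally have "\<bar>-4*(P - Q)/(R - 1/R)\<bar> = 4*\<bar>P - Q\<bar>/(R - 1/R)" .
  also have "\<dots> < 4" using h N by (simp add: field_simps)
  finally show ?thesis using eq by simp
qed

lemma choose_e:
  fixes R a b c d :: real
  assumes R: "R > 1" and det: "a*d - b*c = 1"
    and h1: "\<bar>(a*R + b) - (d/R + c)\<bar> < R - 1/R" and hm: "\<bar>(a*R - b) - (d/R - c)\<bar> < R - 1/R"
    and L: "c + R^2*b \<noteq> 0"
  shows "(c - R^2*b + 1*(d/R - a*R^3)) * (c + R^2*b) < 0 \<or> (c - R^2*b + (-1)*(d/R - a*R^3)) * (c + R^2*b) < 0"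
proof (rule ccontr)
  assume neg: "\<not> ?thesis"
  have R0: "R > 0" using R by simp
  have R21: "R^2 - 1 > 0" using R by (simp add: one_less_power)
  define z where "z = d/R"
  have dz: "d = z*R" using R0 by (simp add: z_def)
  define P1 Q1 Pm Qm where "P1 = a*R + b" "Q1 = z + c" "Pm = a*R - b" "Qm = z - c"
  define al1 alm be1 bem where "al1 = 2*(R*P1 - Q1/R)" "alm = 2*(R*Pm - Qm/R)"
    "be1 = 2*(Q1/R + R*P1)" "bem = 2*(Qm/R + R*Pm)"
  define k where "k = (R^2+1)/(R^2-1)"
  define Lv where "Lv = c + R^2*b"
  have k1: "k > 1" using R21 by (simp add: k_def field_simps)
  have B1: "\<bar>be1 - k*al1\<bar> < 4"
    using bk_bound[OF R, of P1 Q1] h1 by (simp add: al1_alm_be1_bem_def k_def P1_Q1_Pm_Qm_def z_def)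
  have Bm: "\<bar>bem - k*alm\<bar> < 4"
    using bk_bound[OF R, of Pm Qm] hm by (simp add: al1_alm_be1_bem_def k_def P1_Q1_Pm_Qm_def z_def)
  have "be1*bem - al1*alm = 8*(Q1*Pm + P1*Qm)"
    using R0 by (simp add: al1_alm_be1_bem_def field_simps)
  also have "Q1*Pm + P1*Qm = 2*(a*d - b*c)" by (simp add: P1_Q1_Pm_Qm_def dz algebra_simps)
  finally have id: "be1*bem - al1*alm = 16" using det by simp
  have s1: "c - R^2*b + 1*(d/R - a*R^3) = -(R/2)*al1"
    using R0 by (simp add: al1_alm_be1_bem_def P1_Q1_Pm_Qm_def z_def field_simps power2_eq_square power3_eq_cube)
  have sm: "c - R^2*b + (-1)*(d/R - a*R^3) = (R/2)*alm"
    using R0 by (simp add: al1_alm_be1_bem_def P1_Q1_Pm_Qm_def z_def field_simps power2_eq_square power3_eq_cube)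
  have bd: "be1 - bem = 4*Lv/R"
    using R0 by (simp add: al1_alm_be1_bem_def P1_Q1_Pm_Qm_def Lv_def field_simps power2_eq_square)
  have n1: "al1 * Lv \<le> 0"
  proof -
    from neg have nn: "\<not> (c - R^2*b + 1*(d/R - a*R^3)) * (c + R^2*b) < 0" by blast
    then have "\<not> (-(R/2)*al1) * Lv < 0" unfolding s1 Lv_def .
    then have "(-(R/2)*al1) * Lv \<ge> 0" by simp
    then have "(R/2)*(al1 * Lv) \<le> 0" by (simp add: algebra_simps)
    then show ?thesis using R0 by (simp add: mult_le_0_iff)
  qed
  have n2: "alm * Lv \<ge> 0"
  proof -
    from neg have nn: "\<not> (c - R^2*b + (-1)*(d/R - a*R^3)) * (c + R^2*b) < 0" by blast
    then have "\<not> ((R/2)*alm) * Lv < 0" unfolding sm Lv_def .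
    then have "((R/2)*alm) * Lv \<ge> 0" by simp
    then have "(R/2)*(alm * Lv) \<ge> 0" by (simp add: algebra_simps)
    then show ?thesis using R0 by (simp add: zero_le_mult_iff)
  qed
  show False
  proof (cases "Lv > 0")
    case True
    have "al1 \<le> 0" using n1 True by (simp add: mult_le_0_iff)
    moreover have "alm \<ge> 0" using n2 True by (simp add: zero_le_mult_iff)
    moreover have "be1 > bem" using bd True R0 by (simp add: algebra_simps)
    ultimately show False using key_abs[OF k1 _ _ B1 Bm _ id] by simp
  next
    case False
    then have Ln: "Lv < 0" using L by (simp add: Lv_def)
    have "al1 \<ge> 0" using n1 Ln by (simp add: mult_le_0_iff)
    moreover have "alm \<le> 0" using n2 Ln by (simp add: zero_le_mult_iff)
    moreover have "bem > be1" using bd Ln R0 by (simp add: algebra_simps divide_less_0_iff)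
    moreover have "bem*be1 - alm*al1 = 16" using id by (simp add: mult.commute)
    ultimately show False using key_abs[OF k1 _ _ Bm B1] by simp
  qed
qed

theorem mainTheorem15:
  fixes R a b c d :: real
  assumes "R > 1"
    and "a * d - b * c = 1"
    and "\<forall>e \<in> {1, -1}. \<forall>e' \<in> {1, -1}.
           \<bar>a * R + e' * b + e * c + e * e' * d / R\<bar> < \<bar>R + e * e' / R\<bar>"
    and "b \<noteq> 0 \<or> c \<noteq> 0"
  shows "(\<exists>e \<in> {1, -1}. meets_transversely (\<lambda>t. mk2 a b c d ** Pmat' R e t) {0<..} (SQ_ell R))
       \<or> (\<exists>e \<in> {1, -1}. meets_transversely (\<lambda>t. matrix_inv (Pmat R e t) ** mk2 a b c d) {0<..}
            (set_inv (SQ_ell' R)))"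
proof -
  note R = assms(1) and det = assms(2) and H = assms(3) and nd = assms(4)
  have R0: "R > 0" using R by simp
  have Rp: "\<bar>R + 1/R\<bar> = R + 1/R" using R0 by simp
  have Rm: "\<bar>R - 1/R\<bar> = R - 1/R" using R mult_strict_mono[of 1 R 1 R] by (simp add: field_simps)
  have X11: "\<bar>a*R + b + c + d/R\<bar> < R + 1/R" using H Rp by auto
  have X1m: "\<bar>a*R - b + c - d/R\<bar> < R - 1/R" using H Rm by auto
  have Xm1: "\<bar>a*R + b - c - d/R\<bar> < R - 1/R" using H Rm by auto
  have Xmm: "\<bar>a*R - b - c + d/R\<bar> < R + 1/R" using H Rp by auto
  show ?thesis
  proof (cases "c + R^2*b = 0")
    case False
    have c1: "\<bar>(a*R + b) - (d/R + c)\<bar> < R - 1/R" using Xm1 by (simp add: algebra_simps)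
    have cm: "\<bar>(a*R - b) - (d/R - c)\<bar> < R - 1/R" using X1m by (simp add: algebra_simps)
    from choose_e[OF R det c1 cm False] show ?thesis
    proof
      assume sL: "(c - R^2*b + 1*(d/R - a*R^3)) * (c + R^2*b) < 0"
      have "meets_transversely (\<lambda>t. mk2 a b c d ** Pmat' R 1 t) {0<..} (SQ_ell R)"
        by (rule curve1[OF R det _ _ _ sL]) (use X11 Xm1 in \<open>simp_all add: algebra_simps\<close>)
      then show ?thesis by auto
    next
      assume sL: "(c - R^2*b + (-1)*(d/R - a*R^3)) * (c + R^2*b) < 0"
      have "meets_transversely (\<lambda>t. mk2 a b c d ** Pmat' R (-1) t) {0<..} (SQ_ell R)"
        by (rule curve1[OF R det _ _ _ sL]) (use Xmm X1m in \<open>simp_all add: algebra_simps\<close>)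
      then show ?thesis by auto
    qed
  next
    case True
    then have cb: "c = -(R^2*b)" by simp
    have b0: "b \<noteq> 0" using nd cb by auto
    define K where "K = d/R - R^3*a"
    have R4: "R^4 > 1" using R by (simp add: one_less_power)
    have gen: "(b - R^2*c + e*(d/R - R^3*a)) * (R^2*c + b) < 0" if e: "e*b*K \<ge> 0" for e
    proof -
      have "b*(b - R^2*c + e*K) = b^2*(1 + R^4) + e*b*K"
        by (simp add: cb algebra_simps power2_eq_square power4_eq_xxxx)
      also have "\<dots> > 0" using b0 e by (simp add: add_pos_nonneg)
      finally have p: "b*(b - R^2*c + e*K) > 0" .
      have "(b - R^2*c + e*K) * (R^2*c + b) = (1 - R^4) * (b*(b - R^2*c + e*K))"
        by (simp add: cb algebra_simps power2_eq_square power4_eq_xxxx)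
      also have "\<dots> < 0" using p R4 by (simp add: mult_neg_pos)
      finally show ?thesis by (simp add: K_def)
    qed
    show ?thesis
    proof (cases "b*K \<ge> 0")
      case True
      have sL: "(b - R^2*c + 1*(d/R - R^3*a)) * (R^2*c + b) < 0" using gen[of 1] True by simp
      have "meets_transversely (\<lambda>t. matrix_inv (Pmat R 1 t) ** mk2 a b c d) {0<..} (set_inv (SQ_ell' R))"
        by (rule curve2[OF R det _ _ _ sL]) (use X11 X1m in \<open>simp_all add: algebra_simps\<close>)
      then show ?thesis by auto
    next
      case False
      have sL: "(b - R^2*c + (-1)*(d/R - R^3*a)) * (R^2*c + b) < 0" using gen[of "-1"] False by simp
      have "meets_transversely (\<lambda>t. matrix_inv (Pmat R (-1) t) ** mk2 a b c d) {0<..} (set_inv (SQ_ell' R))"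
        by (rule curve2[OF R det _ _ _ sL]) (use Xmm Xm1 in \<open>simp_all add: algebra_simps\<close>)
      then show ?thesis by auto
    qed
  qed
qed

end
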